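(* The homogeneous $(-1)$-configurations are exactly: $\mathcal{L}(1,0,2,1)$ and $\mathcal{L}(2,0,5,1)$ (non-compound), and the compound ones $\mathcal{L}(3,0,3,2)$ (with $\delta=1,n=3,\mu_1=0,\mu_2=1$), $\mathcal{L}(12,0,6,5)$ (with $\delta=2,n=6,\mu_1=0,\mu_2=1$), $\mathcal{L}(21,0,7,8)$ (with $\delta=3,n=7,\mu_1=2,\mu_2=1$), and $\mathcal{L}(48,0,8,17)$ (with $\delta=6,n=8,\mu_1=3,\mu_2=2$).
   Context: Let $p_1,\dots,p_n$ be general points of $\mathbb{P}^2$, $\mathbb{P}'$ the blow-up with pulled-back line class $H$, exceptional curves $E_i$, canonical class $K=-3H+\sum E_i$. $\mathcal{L}(d,0,n,m)$ denotes the class $dH-m\sum_{i=1}^nE_i$ (plane curves of degree $d$ with multiplicity $m$ at $p_1,\dots,p_n$). A numerical $(-1)$-class is a class $A$ with $A^2=-1$ and $A\cdot K=-1$. A homogeneous $(-1)$-configuration is either (non-compound) a class $\mathcal{L}(d,0,n,m)$ which is itself a numerical $(-1)$-class, or (compound) a class of the form $\sum_{\sigma}A_\sigma$ where $n\ge2$, $A=\delta H-\mu_1E_1-\mu_2\sum_{i=2}^nE_i$ is a numerical $(-1)$-class with $\delta\ge1$, $\mu_1,\mu_2\ge0$, $\mu_1\ne\mu_2$, the $A_\sigma$ are the $n$ distinct classes obtained from $A$ by permuting $E_1,\dots,E_n$, and $A_\sigma\cdot A_\tau=0$ for $A_\sigma\neq A_\tau$; this sum is $\mathcal{L}(n\delta,0,n,\mu_1+(n-1)\mu_2)$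 (and necessarily $\mu_1=\mu_2\pm1$). *)

theory Defs
  imports "HOL-Combinatorics.Permutations"
begin

text \<open>Divisor classes on the blow-up of the plane at n general points p_0,...,p_{n-1}.
  A class d H - sum_i m_i E_i is represented by the pair (d, m) with m :: nat => int;
  only the values m i for i < n are meaningful (by convention they are 0 for i >= n).\<close>

type_synonym cls = "int \<times> (nat \<Rightarrow> int)"

text \<open>Intersection form: H.H = 1, E_i.E_i = -1, all other products 0.\<close>
definition dotp :: "nat \<Rightarrow> cls \<Rightarrow> cls \<Rightarrow> int" where
  "dotp n A B = fst A * fst B - (\<Sum>i<n. snd A i * snd B i)"

text \<open>Canonical class K = -3H + sum E_i, i.e. d = -3 and all multiplicities -1.\<close>
definition canon :: "nat \<Rightarrow> cls" where
  "canon n = (-3, \<lambda>i. if i < n then -1 else 0)"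

definition minus_one_class :: "nat \<Rightarrow> cls \<Rightarrow> bool" where
  "minus_one_class n A \<longleftrightarrow> dotp n A A = -1 \<and> dotp n A (canon n) = -1"

text \<open>The homogeneous class L(d,0,n,m) = dH - m sum_{i<n} E_i.\<close>
definition Lcls :: "nat \<Rightarrow> int \<Rightarrow> int \<Rightarrow> cls" where
  "Lcls n d m = (d, \<lambda>i. if i < n then m else 0)"

definition perm_cls :: "(nat \<Rightarrow> nat) \<Rightarrow> cls \<Rightarrow> cls" where
  "perm_cls \<sigma> A = (fst A, snd A \<circ> \<sigma>)"

definition cls_sum :: "cls set \<Rightarrow> cls" where
  "cls_sum S = ((\<Sum>c\<in>S. fst c), (\<lambda>i. \<Sum>c\<in>S. snd c i))"

definition Acls :: "nat \<Rightarrow> int \<Rightarrow> int \<Rightarrow> int \<Rightarrow> cls" where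
  "Acls n \<delta> \<mu>1 \<mu>2 = (\<delta>, \<lambda>i. if i = 0 then \<mu>1 else if i < n then \<mu>2 else 0)"

definition perm_orbit :: "nat \<Rightarrow> cls \<Rightarrow> cls set" where
  "perm_orbit n A = (\<lambda>\<sigma>. perm_cls \<sigma> A) ` {\<sigma>. \<sigma> permutes {..<n}}"

definition noncompound_config :: "nat \<Rightarrow> cls \<Rightarrow> bool" where
  "noncompound_config n C \<longleftrightarrow>
     (\<exists>d m. d \<ge> 0 \<and> m \<ge> 0 \<and> C = Lcls n d m \<and> minus_one_class n C)"

definition compound_config :: "nat \<Rightarrow> cls \<Rightarrow> bool" where
  "compound_config n C \<longleftrightarrow> n \<ge> 2 \<and>
     (\<exists>\<delta> \<mu>1 \<mu>2. \<delta> \<ge> 1 \<and> \<mu>1 \<ge> 0 \<and> \<mu>2 \<ge> 0 \<and> \<mu>1 \<noteq> \<mu>2 \<and>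
        minus_one_class n (Acls n \<delta> \<mu>1 \<mu>2) \<and>
        (\<forall>X\<in>perm_orbit n (Acls n \<delta> \<mu>1 \<mu>2). \<forall>Y\<in>perm_orbit n (Acls n \<delta> \<mu>1 \<mu>2).
            X \<noteq> Y \<longrightarrow> dotp n X Y = 0) \<and>
        C = cls_sum (perm_orbit n (Acls n \<delta> \<mu>1 \<mu>2)))"

definition homog_config :: "nat \<Rightarrow> cls \<Rightarrow> bool" where
  "homog_config n C \<longleftrightarrow> noncompound_config n C \<or> compound_config n C"

end

theory Submission
  imports Defs
begin

lemma noncomp_arith:
  fixes N d m :: int
  assumes "N \<ge> 0" "d \<ge> 0" "m \<ge> 0" "d^2 - N*m^2 = -1" "-3*d + N*m = -1"
  shows "(N,d,m) \<in> {(2,1,1),(5,2,1)}"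
proof -
  have nm: "N*m = 3*d - 1" using assms by linarith
  have "N*(N*m^2) = (N*m)^2" by (simp add: power2_eq_square)
  hence key: "N*(d^2+1) = (3*d-1)^2" using assms nm by (simp add: algebra_simps)
  have N8: "N \<le> 8"
  proof (rule ccontr)
    assume "\<not> N \<le> 8"
    hence "N*(d^2+1) \<ge> 9*(d^2+1)" by (intro mult_right_mono) auto
    thus False using key assms by (simp add: power2_eq_square algebra_simps)
  qed
  have d7: "d \<le> 7"
  proof (rule ccontr)
    assume "\<not> d \<le> 7"
    hence a1: "(9 - N)*(d*d) \<ge> 1*(d*d)" by (intro mult_right_mono) (use N8 in auto)
    have a2: "(9-N)*(d*d) = 6*d + N - 1" using key by (simp add: power2_eq_square algebra_simps)
    have a3: "d*d \<ge> 8*d" using \<open>\<not> d \<le> 7\<close> by (intro mult_right_mono) auto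
    from a1 a2 a3 N8 \<open>\<not> d \<le> 7\<close> show False by linarith
  qed
  have "d = 0 \<or> d = 1 \<or> d = 2 \<or> d = 3 \<or> d = 4 \<or> d = 5 \<or> d = 6 \<or> d = 7"
    using d7 assms by linarith
  thus ?thesis
  proof (elim disjE)
    assume "d = 0" hence "N*m = -1" using nm by simp
    moreover have "N*m \<ge> 0" using assms by simp
    ultimately show ?thesis by simp
  next
    assume h: "d = 1" hence "N = 2" using key by simp
    thus ?thesis using nm h by auto
  next
    assume h: "d = 2" hence "N = 5" using key by simp
    thus ?thesis using nm h by auto
  next
    assume h: "d = 3" hence False using key by simp presburger thus ?thesis ..
  next
    assume h: "d = 4" hence False using key by simp presburger thus ?thesis ..
  next
    assume h: "d = 5" hence False using key by simp presburger thus ?thesis ..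
  next
    assume h: "d = 6" hence False using key by simp presburger thus ?thesis ..
  next
    assume h: "d = 7" hence "N = 8" using key by simp
    thus ?thesis using nm h by presburger
  qed
qed

lemma comp_arith:
  fixes N \<delta> t s :: int
  assumes "N \<ge> 2" "\<delta> \<ge> 1" "t \<ge> 0" "s \<ge> 0" "t \<noteq> s"
    "\<delta>^2 - (t^2 + (N-1)*s^2) = -1" "-3*\<delta> + (t + (N-1)*s) = -1"
    "\<delta>^2 - (2*t*s + (N-2)*s^2) = 0"
  shows "(N,\<delta>,t,s) \<in> {(3,1,0,1),(6,2,0,1),(7,3,2,1),(8,6,3,2)}"
proof -
  have "(t-s)^2 = 1" using assms(6,8) by (simp add: power2_eq_square algebra_simps)
  hence "t - s = 1 \<or> t - s = -1" using power2_eq_1_iff by blast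
  thus ?thesis
  proof
    assume e: "t - s = 1"
    hence t: "t = s + 1" by simp
    have ns: "N*s = 3*\<delta> - 2" using assms(7) t by (simp add: algebra_simps)
    have "\<delta>^2 = s*(N*s) + 2*s" using assms(8) t by (simp add: power2_eq_square algebra_simps)
    hence "\<delta>*\<delta> = \<delta>*(3*s)" using ns by (simp add: power2_eq_square algebra_simps)
    hence ds: "\<delta> = 3*s" using assms(2) by simp
    hence s2: "s*(9-N) = 2" using ns by (simp add: algebra_simps)
    have s1: "s \<ge> 1" using s2 assms(4) by (cases "s = 0") auto
    have N9: "9 - N \<ge> 1"
    proof (rule ccontr)
      assume "\<not> 9 - N \<ge> 1"
      hence "s*(9-N) \<le> 0" using assms(4) by (simp add: mult_nonneg_nonpos)
      thus False using s2 by simp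
    qed
    have "s \<le> 2" using mult_left_mono[OF N9, of s] s2 assms(4) by simp
    hence "s = 1 \<or> s = 2" using s1 by linarith
    thus ?thesis
    proof
      assume "s = 1" thus ?thesis using s2 ds t by simp
    next
      assume "s = 2" thus ?thesis using s2 ds t by simp
    qed
  next
    assume e: "t - s = -1"
    hence t: "t = s - 1" by simp
    have ns: "N*s = 3*\<delta>" using assms(7) t by (simp add: algebra_simps)
    have "\<delta>^2 = s*(N*s) - 2*s" using assms(8) t by (simp add: power2_eq_square algebra_simps)
    hence q: "\<delta>^2 = 3*\<delta>*s - 2*s" using ns by (simp add: algebra_simps)
    hence "N*\<delta>^2 = N*(3*\<delta>*s - 2*s)" by simp
    hence "N*\<delta>^2 = 3*\<delta>*(N*s) - 2*(N*s)" by (simp add: algebra_simps)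
    hence "\<delta>*(N*\<delta>) = \<delta>*(9*\<delta> - 6)" using ns by (simp add: power2_eq_square algebra_simps)
    hence "N*\<delta> = 9*\<delta> - 6" using assms(2) mult_left_cancel[of \<delta> "N*\<delta>" "9*\<delta> - 6"] by simp
    hence d6: "\<delta>*(9-N) = 6" by (simp add: algebra_simps)
    have N9: "9 - N \<ge> 1"
    proof (rule ccontr)
      assume "\<not> 9 - N \<ge> 1"
      hence "\<delta>*(9-N) \<le> 0" using assms(2) by (simp add: mult_nonneg_nonpos)
      thus False using d6 by simp
    qed
    have "\<delta> \<le> 6" using mult_left_mono[OF N9, of \<delta>] d6 assms(2) by simp
    hence "\<delta> = 1 \<or> \<delta> = 2 \<or> \<delta> = 3 \<or> \<delta> = 4 \<or> \<delta> = 5 \<or> \<delta> = 6" using assms(2) by linarith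
    thus ?thesis
    proof (elim disjE)
      assume h: "\<delta> = 1" hence "N = 3" using d6 by simp
      thus ?thesis using ns h t by simp
    next
      assume h: "\<delta> = 2" hence "N = 6" using d6 by simp
      thus ?thesis using ns h t by simp
    next
      assume h: "\<delta> = 3" hence "N = 7" using d6 by simp
      thus ?thesis using ns h t by presburger
    next
      assume h: "\<delta> = 4" thus ?thesis using d6 by presburger
    next
      assume h: "\<delta> = 5" thus ?thesis using d6 by presburger
    next
      assume h: "\<delta> = 6" hence "N = 8" using d6 by simp
      thus ?thesis using ns h t by presburger
    qed
  qed
qed


definition Bc :: "nat \<Rightarrow> int \<Rightarrow> int \<Rightarrow> int \<Rightarrow> nat \<Rightarrow> cls" where
  "Bc n \<delta> a b j = (\<delta>, \<lambda>i. if i = j then a else if i < n then b else 0)"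

lemma sum_if_eq:
  fixes a b :: int
  assumes "j < n"
  shows "(\<Sum>i<n. if i = j then a else b) = a + (int n - 1) * b"
proof -
  have "(\<Sum>i<n. if i = j then a else b) = (\<Sum>i<n. b + (if i = j then a - b else 0))"
    by (rule sum.cong) auto
  also have "\<dots> = int n * b + (a - b)" using assms by (simp add: sum.distrib)
  finally show ?thesis by (simp add: algebra_simps)
qed

lemma sum_if_eq2:
  fixes a b :: int
  assumes "j < n" "k < n" "j \<noteq> k"
  shows "(\<Sum>i<n. (if i = j then a else b) * (if i = k then a else b)) = 2*a*b + (int n - 2) * b^2"
proof -
  have "(\<Sum>i<n. (if i = j then a else b) * (if i = k then a else b)) =
     (\<Sum>i<n. b*b + ((if i = j then (a - b)*b else 0) + (if i = k then (a - b)*b else 0)))"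
    by (rule sum.cong) (use assms in \<open>auto simp: algebra_simps\<close>)
  also have "\<dots> = int n * (b*b) + 2*((a - b)*b)" using assms by (simp add: sum.distrib)
  finally show ?thesis by (simp add: algebra_simps power2_eq_square)
qed

lemma dot_BB:
  assumes "j < n" "k < n" "j \<noteq> k"
  shows "dotp n (Bc n \<delta> a b j) (Bc n \<delta> a b k) = \<delta>^2 - (2*a*b + (int n - 2) * b^2)"
proof -
  have "(\<Sum>i<n. snd (Bc n \<delta> a b j) i * snd (Bc n \<delta> a b k) i) =
      (\<Sum>i<n. (if i = j then a else b) * (if i = k then a else b))"
    by (rule sum.cong) (auto simp: Bc_def)
  thus ?thesis using sum_if_eq2[OF assms, of a b] by (simp add: dotp_def Bc_def power2_eq_square)
qed

lemma dot_Bself: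
  assumes "j < n"
  shows "dotp n (Bc n \<delta> a b j) (Bc n \<delta> a b j) = \<delta>^2 - (a^2 + (int n - 1) * b^2)"
proof -
  have "(\<Sum>i<n. snd (Bc n \<delta> a b j) i * snd (Bc n \<delta> a b j) i) =
      (\<Sum>i<n. (if i = j then a^2 else b^2))"
    by (rule sum.cong) (auto simp: Bc_def power2_eq_square)
  thus ?thesis using sum_if_eq[OF assms, of "a^2" "b^2"] by (simp add: dotp_def Bc_def power2_eq_square)
qed

lemma dot_Bcanon:
  assumes "j < n"
  shows "dotp n (Bc n \<delta> a b j) (canon n) = -3*\<delta> + (a + (int n - 1) * b)"
proof -
  have "(\<Sum>i<n. snd (Bc n \<delta> a b j) i * snd (canon n) i) =
      - (\<Sum>i<n. (if i = j then a else b))"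
    by (subst sum_negf[symmetric], rule sum.cong) (auto simp: Bc_def canon_def)
  thus ?thesis using sum_if_eq[OF assms, of a b] by (simp add: dotp_def Bc_def canon_def)
qed

lemma Acls_Bc: "Acls n \<delta> a b = Bc n \<delta> a b 0"
  by (simp add: Acls_def Bc_def)

lemma orbit:
  assumes "0 < n"
  shows "perm_orbit n (Acls n \<delta> a b) = Bc n \<delta> a b ` {..<n}"
proof
  show "perm_orbit n (Acls n \<delta> a b) \<subseteq> Bc n \<delta> a b ` {..<n}"
  proof
    fix X assume "X \<in> perm_orbit n (Acls n \<delta> a b)"
    then obtain \<sigma> where p: "\<sigma> permutes {..<n}" and X: "X = perm_cls \<sigma> (Acls n \<delta> a b)"
      unfolding perm_orbit_def by auto
    define j where "j = inv \<sigma> 0"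
    have j: "j < n" using permutes_in_image[OF permutes_inv[OF p], of 0] assms by (simp add: j_def)
    have "X = Bc n \<delta> a b j"
    proof -
      have "(if \<sigma> i = 0 then a else if \<sigma> i < n then b else 0) =
            (if i = j then a else if i < n then b else 0)" for i
      proof (cases "i < n")
        case True
        have "\<sigma> i < n" using permutes_in_image[OF p, of i] True by simp
        moreover have "\<sigma> i = 0 \<longleftrightarrow> i = j" using permutes_inv_eq[OF p, of 0 i] by (auto simp: j_def)
        ultimately show ?thesis using True by simp
      next
        case False
        hence "\<sigma> i = i" using permutes_not_in[OF p, of i] by simp
        thus ?thesis using False j assms by auto
      qed
      thus ?thesis by (simp add: X perm_cls_def Acls_def Bc_def o_def)
    qed
    thus "X \<in> Bc n \<delta> a b ` {..<n}" using j by auto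
  qed
next
  show "Bc n \<delta> a b ` {..<n} \<subseteq> perm_orbit n (Acls n \<delta> a b)"
  proof
    fix X assume "X \<in> Bc n \<delta> a b ` {..<n}"
    then obtain j where j: "j < n" and X: "X = Bc n \<delta> a b j" by auto
    have p: "transpose 0 j permutes {..<n}" using permutes_swap_id[of 0 "{..<n}" j] j assms by simp
    have "X = perm_cls (transpose 0 j) (Acls n \<delta> a b)"
      using j by (auto simp: X perm_cls_def Acls_def Bc_def o_def transpose_def)
    thus "X \<in> perm_orbit n (Acls n \<delta> a b)" using p unfolding perm_orbit_def by blast
  qed
qed

lemma Bc_inj:
  assumes "a \<noteq> b"
  shows "inj_on (Bc n \<delta> a b) {..<n}"
proof
  fix j k assume "j \<in> {..<n}" "k \<in> {..<n}" "Bc n \<delta> a b j = Bc n \<delta> a b k"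
  hence "snd (Bc n \<delta> a b j) j = snd (Bc n \<delta> a b k) j" by simp
  thus "j = k" using assms \<open>j \<in> {..<n}\<close> by (auto simp: Bc_def split: if_splits)
qed

lemma orbit_sum:
  assumes "0 < n" "a \<noteq> b"
  shows "cls_sum (perm_orbit n (Acls n \<delta> a b)) = Lcls n (int n * \<delta>) (a + (int n - 1) * b)"
proof -
  have "cls_sum (perm_orbit n (Acls n \<delta> a b)) =
     ((\<Sum>j<n. \<delta>), (\<lambda>i. \<Sum>j<n. snd (Bc n \<delta> a b j) i))"
    unfolding orbit[OF assms(1)] cls_sum_def
    by (simp add: sum.reindex[OF Bc_inj[OF assms(2)]]) (simp add: Bc_def)
  moreover have "(\<Sum>j<n. snd (Bc n \<delta> a b j) i) = (if i < n then a + (int n - 1) * b else 0)" for i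
  proof (cases "i < n")
    case True
    have "(\<Sum>j<n. snd (Bc n \<delta> a b j) i) = (\<Sum>j<n. if j = i then a else b)"
      by (rule sum.cong) (use True in \<open>auto simp: Bc_def\<close>)
    thus ?thesis using sum_if_eq[OF True, of a b] True by simp
  next
    case False
    thus ?thesis by (simp add: Bc_def)
  qed
  ultimately show ?thesis by (simp add: Lcls_def)
qed


lemma dot_L: "dotp n (Lcls n d m) (Lcls n d m) = d^2 - int n * m^2"
  by (simp add: dotp_def Lcls_def power2_eq_square)

lemma dot_Lcanon: "dotp n (Lcls n d m) (canon n) = -3*d + int n * m"
  by (simp add: dotp_def Lcls_def canon_def)

lemma compound_intro:
  assumes "n \<ge> 2" "\<delta> \<ge> 1" "a \<ge> 0" "b \<ge> 0" "a \<noteq> b"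
    "\<delta>^2 - (a^2 + (int n - 1)*b^2) = -1" "-3*\<delta> + (a + (int n - 1)*b) = -1"
    "\<delta>^2 - (2*a*b + (int n - 2)*b^2) = 0"
    "d = int n * \<delta>" "m = a + (int n - 1) * b"
  shows "compound_config n (Lcls n d m)"
proof -
  have n0: "0 < n" using assms(1) by simp
  have "minus_one_class n (Acls n \<delta> a b)"
    unfolding minus_one_class_def Acls_Bc using dot_Bself[OF n0] dot_Bcanon[OF n0] assms(6,7) by simp
  moreover have "\<forall>X\<in>perm_orbit n (Acls n \<delta> a b). \<forall>Y\<in>perm_orbit n (Acls n \<delta> a b).
            X \<noteq> Y \<longrightarrow> dotp n X Y = 0"
    unfolding orbit[OF n0]
  proof (intro ballI impI)
    fix X Y assume "X \<in> Bc n \<delta> a b ` {..<n}" "Y \<in> Bc n \<delta> a b ` {..<n}" "X \<noteq> Y"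
    then obtain j k where "j < n" "k < n" "X = Bc n \<delta> a b j" "Y = Bc n \<delta> a b k" by blast
    moreover have "j \<noteq> k" using calculation \<open>X \<noteq> Y\<close> by blast
    ultimately show "dotp n X Y = 0" using dot_BB assms(8) by simp
  qed
  moreover have "Lcls n d m = cls_sum (perm_orbit n (Acls n \<delta> a b))"
    using orbit_sum[OF n0 assms(5)] assms(9,10) by simp
  ultimately show ?thesis unfolding compound_config_def using assms(1-5) by blast
qed

lemma compound_dest:
  assumes "compound_config n (Lcls n (int d) (int m))"
  shows "(n, d, m) \<in> {(3, 3, 2), (6, 12, 5), (7, 21, 8), (8, 48, 17)}"
proof -
  obtain \<delta> a b where n2: "n \<ge> 2" and h: "\<delta> \<ge> 1" "a \<ge> 0" "b \<ge> 0" "a \<noteq> b"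
    and mo: "minus_one_class n (Acls n \<delta> a b)"
    and orth: "\<forall>X\<in>perm_orbit n (Acls n \<delta> a b). \<forall>Y\<in>perm_orbit n (Acls n \<delta> a b).
            X \<noteq> Y \<longrightarrow> dotp n X Y = 0"
    and C: "Lcls n (int d) (int m) = cls_sum (perm_orbit n (Acls n \<delta> a b))"
    using assms unfolding compound_config_def by blast
  have n0: "0 < n" using n2 by simp
  have e1: "\<delta>^2 - (a^2 + (int n - 1)*b^2) = -1" and e2: "-3*\<delta> + (a + (int n - 1)*b) = -1"
  proof -
    have "dotp n (Bc n \<delta> a b 0) (Bc n \<delta> a b 0) = -1" "dotp n (Bc n \<delta> a b 0) (canon n) = -1"
      using mo by (simp_all only: minus_one_class_def Acls_Bc)
    with dot_Bself[OF n0, of \<delta> a b] dot_Bcanon[OF n0, of \<delta> a b]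
    show "\<delta>^2 - (a^2 + (int n - 1)*b^2) = -1" "-3*\<delta> + (a + (int n - 1)*b) = -1" by linarith+
  qed
  have "Bc n \<delta> a b 0 \<noteq> Bc n \<delta> a b 1"
  proof
    assume "Bc n \<delta> a b 0 = Bc n \<delta> a b 1"
    hence "snd (Bc n \<delta> a b 0) 0 = snd (Bc n \<delta> a b 1) 0" by simp
    thus False using n2 h(4) by (simp add: Bc_def)
  qed
  moreover have "Bc n \<delta> a b 0 \<in> perm_orbit n (Acls n \<delta> a b)" "Bc n \<delta> a b 1 \<in> perm_orbit n (Acls n \<delta> a b)"
    unfolding orbit[OF n0] using n2 by auto
  ultimately have "dotp n (Bc n \<delta> a b 0) (Bc n \<delta> a b 1) = 0"
    using orth by blast
  moreover have "dotp n (Bc n \<delta> a b 0) (Bc n \<delta> a b 1) = \<delta>^2 - (2*a*b + (int n - 2)*b^2)"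
    by (rule dot_BB) (use n2 in auto)
  ultimately have e3: "\<delta>^2 - (2*a*b + (int n - 2)*b^2) = 0" by linarith
  have LL: "Lcls n (int d) (int m) = Lcls n (int n * \<delta>) (a + (int n - 1) * b)"
    using C orbit_sum[OF n0 h(4)] by simp
  hence dm: "int d = int n * \<delta>" "int m = a + (int n - 1) * b"
  proof -
    from LL have "snd (Lcls n (int d) (int m)) 0 = snd (Lcls n (int n * \<delta>) (a + (int n - 1) * b)) 0"
      "fst (Lcls n (int d) (int m)) = fst (Lcls n (int n * \<delta>) (a + (int n - 1) * b))" by simp_all
    thus "int d = int n * \<delta>" "int m = a + (int n - 1) * b" using n0 by (simp_all add: Lcls_def)
  qed
  have "(int n, \<delta>, a, b) \<in> {(3,1,0,1),(6,2,0,1),(7,3,2,1),(8,6,3,2)}"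
    by (rule comp_arith) (use n2 h e1 e2 e3 in auto)
  thus ?thesis using dm by auto
qed

theorem proposition5p4:
  fixes n d m :: nat
  shows "homog_config n (Lcls n (int d) (int m)) \<longleftrightarrow>
    (n, d, m) \<in> {(2, 1, 1), (5, 2, 1), (3, 3, 2), (6, 12, 5), (7, 21, 8), (8, 48, 17)}"
proof
  assume "homog_config n (Lcls n (int d) (int m))"
  hence "noncompound_config n (Lcls n (int d) (int m)) \<or> compound_config n (Lcls n (int d) (int m))"
    by (simp add: homog_config_def)
  thus "(n, d, m) \<in> {(2, 1, 1), (5, 2, 1), (3, 3, 2), (6, 12, 5), (7, 21, 8), (8, 48, 17)}"
  proof
    assume "noncompound_config n (Lcls n (int d) (int m))"
    hence "minus_one_class n (Lcls n (int d) (int m))" unfolding noncompound_config_def by blast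
    hence "int d ^ 2 - int n * int m ^ 2 = -1" "-3 * int d + int n * int m = -1"
      by (simp_all add: minus_one_class_def dot_L dot_Lcanon)
    hence "(int n, int d, int m) \<in> {(2,1,1),(5,2,1)}" by (intro noncomp_arith) auto
    thus ?thesis by auto
  next
    assume "compound_config n (Lcls n (int d) (int m))"
    hence "(n, d, m) \<in> {(3, 3, 2), (6, 12, 5), (7, 21, 8), (8, 48, 17)}" by (rule compound_dest)
    thus ?thesis by blast
  qed
next
  assume H: "(n, d, m) \<in> {(2, 1, 1), (5, 2, 1), (3, 3, 2), (6, 12, 5), (7, 21, 8), (8, 48, 17)}"
  have nc: "homog_config n (Lcls n (int d) (int m))" if "minus_one_class n (Lcls n (int d) (int m))"
    unfolding homog_config_def noncompound_config_def
    by (rule disjI1, rule exI[of _ "int d"], rule exI[of _ "int m"]) (simp add: that)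
  from H consider "n = 2" "d = 1" "m = 1" | "n = 5" "d = 2" "m = 1" | "n = 3" "d = 3" "m = 2"
    | "n = 6" "d = 12" "m = 5" | "n = 7" "d = 21" "m = 8" | "n = 8" "d = 48" "m = 17"
    by (simp only: insert_iff empty_iff prod.inject) blast
  thus "homog_config n (Lcls n (int d) (int m))"
  proof cases
    case 1 thus ?thesis by (intro nc) (simp add: minus_one_class_def dot_L dot_Lcanon)
  next
    case 2 thus ?thesis by (intro nc) (simp add: minus_one_class_def dot_L dot_Lcanon)
  next
    case 3
    have "compound_config 3 (Lcls 3 3 2)" by (rule compound_intro[of 3 1 0 1]) simp_all
    thus ?thesis using 3 by (simp add: homog_config_def)
  next
    case 4
    have "compound_config 6 (Lcls 6 12 5)" by (rule compound_intro[of 6 2 0 1]) simp_all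
    thus ?thesis using 4 by (simp add: homog_config_def)
  next
    case 5
    have "compound_config 7 (Lcls 7 21 8)" by (rule compound_intro[of 7 3 2 1]) simp_all
    thus ?thesis using 5 by (simp add: homog_config_def)
  next
    case 6
    have "compound_config 8 (Lcls 8 48 17)" by (rule compound_intro[of 8 6 3 2]) simp_all
    thus ?thesis using 6 by (simp add: homog_config_def)
  qed
qed

end
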